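(* Let $G$ be a group and $S\subset G$ a finite generating set with $S\cap S^{-1}=\emptyset$. Assume that there are no $a,b,c\in S$ with $abc=e$ in $G$, and that $\langle S\mid R\rangle$ with $R=\{a\cdot b\cdot c^{-1}\mid a,b,c\in S,\ abc^{-1}=e \text{ in } G\}$ is a presentation of $G$. Then the action of $G$ on $Flag(G,S)$ by left multiplication is free.
   Context: For a group $G$ and a finite generating set $S\subset G$ with $S\cap S^{-1}=\emptyset$, the Cayley graph $\Gamma(G,S)$ has vertex set $\{v[g]\mid g\in G\}$ and, for each $g\in G$, $s\in S$, a directed edge from $v[g]$ to $v[gs]$; the underlying undirected graph is simple. $Flag(G,S)$ denotes the flag complex of $\Gamma(G,S)$ (a simplex for every finite set of pairwise adjacent vertices), on which $G$ acts by left multiplication. *)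

theory Defs
  imports "HOL-Algebra.Algebra"
begin

(* Words in the free group on a set S: lists of letters (s, True) = s, (s, False) = s^-1 *)
type_synonym 'a letter = "'a \<times> bool"

definition letter_eval :: "('a, 'b) monoid_scheme \<Rightarrow> 'a letter \<Rightarrow> 'a" where
  "letter_eval G l = (if snd l then fst l else inv\<^bsub>G\<^esub> (fst l))"

fun word_eval :: "('a, 'b) monoid_scheme \<Rightarrow> 'a letter list \<Rightarrow> 'a" where
  "word_eval G [] = \<one>\<^bsub>G\<^esub>"
| "word_eval G (l # w) = letter_eval G l \<otimes>\<^bsub>G\<^esub> word_eval G w"

definition words_over :: "'a set \<Rightarrow> 'a letter list set" where
  "words_over S = {w. \<forall>l \<in> set w. fst l \<in> S}"

(* The congruence on words generated by free reductions and insertion/deletion of relators;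
   w ~ [] iff w lies in the normal closure of R in the free group F(S). *)
inductive word_equiv :: "'a set \<Rightarrow> 'a letter list set \<Rightarrow> 'a letter list \<Rightarrow> 'a letter list \<Rightarrow> bool"
  for S R where
  refl: "word_equiv S R w w"
| sym: "word_equiv S R u v \<Longrightarrow> word_equiv S R v u"
| trans: "word_equiv S R u v \<Longrightarrow> word_equiv S R v w \<Longrightarrow> word_equiv S R u w"
| free_red: "x \<in> S \<Longrightarrow> word_equiv S R (u @ [(x, b), (x, \<not> b)] @ v) (u @ v)"
| relator: "r \<in> R \<Longrightarrow> word_equiv S R (u @ r @ v) (u @ v)"

(* <S | R> is a presentation of G: the natural map F(S)/<<R>> -> G is an isomorphism,
   i.e. relators hold in G, the map is onto, and its kernel is the normal closure of R. *)
definition is_presentation :: "('a, 'b) monoid_scheme \<Rightarrow> 'a set \<Rightarrow> 'a letter list set \<Rightarrow> bool" where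
  "is_presentation G S R \<longleftrightarrow>
     R \<subseteq> words_over S \<and>
     (\<forall>r \<in> R. word_eval G r = \<one>\<^bsub>G\<^esub>) \<and>
     word_eval G ` words_over S = carrier G \<and>
     (\<forall>w \<in> words_over S. word_eval G w = \<one>\<^bsub>G\<^esub> \<longrightarrow> word_equiv S R w [])"

definition triangle_relators :: "('a, 'b) monoid_scheme \<Rightarrow> 'a set \<Rightarrow> 'a letter list set" where
  "triangle_relators G S =
     {[(a, True), (b, True), (c, False)] | a b c.
        a \<in> S \<and> b \<in> S \<and> c \<in> S \<and> a \<otimes>\<^bsub>G\<^esub> b \<otimes>\<^bsub>G\<^esub> inv\<^bsub>G\<^esub> c = \<one>\<^bsub>G\<^esub>}"

definition cayley_adj :: "('a, 'b) monoid_scheme \<Rightarrow> 'a set \<Rightarrow> 'a \<Rightarrow> 'a \<Rightarrow> bool" where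
  "cayley_adj G S g h \<longleftrightarrow> g \<in> carrier G \<and> h \<in> carrier G \<and>
     (\<exists>s \<in> S. h = g \<otimes>\<^bsub>G\<^esub> s \<or> g = h \<otimes>\<^bsub>G\<^esub> s)"

definition flag_simplices :: "('a, 'b) monoid_scheme \<Rightarrow> 'a set \<Rightarrow> 'a set set" where
  "flag_simplices G S = {\<sigma>. \<sigma> \<noteq> {} \<and> finite \<sigma> \<and> \<sigma> \<subseteq> carrier G \<and>
     (\<forall>x \<in> \<sigma>. \<forall>y \<in> \<sigma>. x \<noteq> y \<longrightarrow> cayley_adj G S x y)}"

definition left_mult_simplex :: "('a, 'b) monoid_scheme \<Rightarrow> 'a \<Rightarrow> 'a set \<Rightarrow> 'a set" where
  "left_mult_simplex G g \<sigma> = (\<lambda>x. g \<otimes>\<^bsub>G\<^esub> x) ` \<sigma>"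

definition flag_action_free :: "('a, 'b) monoid_scheme \<Rightarrow> 'a set \<Rightarrow> bool" where
  "flag_action_free G S \<longleftrightarrow>
     (\<forall>g \<in> carrier G. \<forall>\<sigma> \<in> flag_simplices G S.
        left_mult_simplex G g \<sigma> = \<sigma> \<longrightarrow> g = \<one>\<^bsub>G\<^esub>)"

end

theory Submission
  imports Defs
begin

lemma (in group) powers_in_S_False:
  assumes SG: "S \<subseteq> carrier G"
    and ninv: "\<forall>s \<in> S. inv s \<notin> S"
    and notri: "\<not> (\<exists>a \<in> S. \<exists>b \<in> S. \<exists>c \<in> S. a \<otimes> b \<otimes> c = \<one>)"
    and uS: "u \<in> S" and um: "u [^] (m::nat) = \<one>" and m0: "m > 0"
    and hyp: "\<forall>n::nat. u [^] n \<noteq> \<one> \<longrightarrow> u [^] n \<in> S \<or> inv (u [^] n) \<in> S"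
  shows False
proof -
  have uc: "u \<in> carrier G" using uS SG by auto
  have one_notin: "\<one> \<notin> S" using notri by fastforce
  have P: "u [^] Suc n \<in> S \<or> u [^] Suc n = \<one>" for n
  proof (induction n)
    case 0 then show ?case using uS uc by simp
  next
    case (Suc n)
    have v: "u [^] Suc (Suc n) = u \<otimes> u [^] Suc n" using uc nat_pow_Suc2 by blast
    show ?case
    proof (cases "u [^] Suc n = \<one>")
      case True then show ?thesis using v uS uc by simp
    next
      case False
      with Suc have inS: "u [^] Suc n \<in> S" by blast
      show ?thesis
      proof (rule ccontr)
        assume nv: "\<not> ?thesis"
        then have iv: "inv (u [^] Suc (Suc n)) \<in> S" using hyp by blast
        have "u \<otimes> u [^] Suc n \<otimes> inv (u [^] Suc (Suc n)) = \<one>"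
          using v uc by (metis nat_pow_closed r_inv)
        then show False using notri uS inS iv by blast
      qed
    qed
  qed
  obtain k where k: "m = Suc k" using m0 gr0_implies_Suc by blast
  show False
  proof (cases k)
    case 0 then show ?thesis using um k uc uS one_notin by simp
  next
    case (Suc k')
    have e: "u [^] k \<otimes> u = \<one>" using um k by simp
    have Pk: "u [^] k \<in> S \<or> u [^] k = \<one>" using P[of k'] Suc by simp
    then show ?thesis
    proof
      assume "u [^] k \<in> S"
      moreover have "inv u = u [^] k" using inv_equality[OF e] uc by simp
      ultimately show False using ninv uS by auto
    next
      assume "u [^] k = \<one>"
      then show False using e uc uS one_notin by simp
    qed
  qed
qed

lemma (in group) cancel_r_inv:
  "a \<in> carrier G \<Longrightarrow> b \<in> carrier G \<Longrightarrow> b \<otimes> a \<otimes> inv a = b"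
  by (simp add: m_assoc)

lemma (in group) main_aux:
  assumes SG: "S \<subseteq> carrier G"
    and ninv: "\<forall>s \<in> S. inv s \<notin> S"
    and notri: "\<not> (\<exists>a \<in> S. \<exists>b \<in> S. \<exists>c \<in> S. a \<otimes> b \<otimes> c = \<one>)"
  shows "flag_action_free G S"
proof -
  show ?thesis unfolding flag_action_free_def
  proof (intro ballI impI)
    fix g \<sigma>
    assume gc: "g \<in> carrier G" and sig: "\<sigma> \<in> flag_simplices G S"
      and fix1: "left_mult_simplex G g \<sigma> = \<sigma>"
    have ne: "\<sigma> \<noteq> {}" and fin: "finite \<sigma>" and sc: "\<sigma> \<subseteq> carrier G"
      and adj: "\<And>x y. x \<in> \<sigma> \<Longrightarrow> y \<in> \<sigma> \<Longrightarrow> x \<noteq> y \<Longrightarrow> cayley_adj G S x y"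
      using sig unfolding flag_simplices_def by auto
    have img: "(\<lambda>y. g \<otimes> y) ` \<sigma> = \<sigma>" using fix1 unfolding left_mult_simplex_def .
    obtain x where x: "x \<in> \<sigma>" using ne by blast
    have xc: "x \<in> carrier G" using x sc by auto
    have orb: "g [^] n \<otimes> x \<in> \<sigma>" for n :: nat
    proof (induction n)
      case 0 then show ?case using x xc by simp
    next
      case (Suc n)
      have "g [^] Suc n \<otimes> x = g \<otimes> (g [^] n \<otimes> x)"
        using gc xc nat_pow_Suc2[OF gc, of n] by (simp only:, simp add: m_assoc)
      also have "\<dots> \<in> (\<lambda>y. g \<otimes> y) ` \<sigma>" using Suc by blast
      finally show ?case using img by simp
    qed
    define f where "f = (\<lambda>n::nat. g [^] n \<otimes> x)"
    have "\<not> inj_on f {..card \<sigma>}"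
    proof
      assume "inj_on f {..card \<sigma>}"
      moreover have "f ` {..card \<sigma>} \<subseteq> \<sigma>" using orb f_def by auto
      ultimately have "card {..card \<sigma>} \<le> card \<sigma>" using card_inj_on_le fin by blast
      then show False by simp
    qed
    then obtain i j where ij: "i \<noteq> j" "f i = f j" unfolding inj_on_def by blast
    obtain p :: nat where p0: "p > 0" and gp: "g [^] p = \<one>"
    proof -
      have "\<exists>i j. i < j \<and> f i = f j" using ij by (metis linorder_neqE_nat)
      then obtain a b where ab0: "a < b" "f a = f b" by blast
      then have ab: "a < b" "g [^] a \<otimes> x = g [^] b \<otimes> x" unfolding f_def by auto
      then have e: "g [^] a = g [^] b" using gc xc by (meson nat_pow_closed r_cancel)
      have "g [^] b = g [^] a \<otimes> g [^] (b - a)" using ab(1) gc by (simp add: nat_pow_mult)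
      then have "g [^] a \<otimes> g [^] (b - a) = g [^] a \<otimes> \<one>" using e gc by simp
      then have "g [^] (b - a) = \<one>" using gc by (meson l_cancel nat_pow_closed one_closed)
      then show thesis using that[of "b - a"] ab(1) by simp
    qed
    define h where "h = inv x \<otimes> g \<otimes> x"
    have hc: "h \<in> carrier G" using h_def gc xc by simp
    have hpow: "h [^] n = inv x \<otimes> g [^] n \<otimes> x" for n :: nat
    proof (induction n)
      case 0 then show ?case using xc by simp
    next
      case (Suc n)
      have "h [^] Suc n = inv x \<otimes> g [^] n \<otimes> x \<otimes> (inv x \<otimes> g \<otimes> x)" using Suc h_def by simp
      also have "\<dots> = inv x \<otimes> (g [^] n \<otimes> (x \<otimes> inv x) \<otimes> g) \<otimes> x"
        using gc xc by (simp add: m_assoc[symmetric] cancel_r_inv)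
      also have "\<dots> = inv x \<otimes> g [^] Suc n \<otimes> x" using gc xc by simp
      finally show ?case .
    qed
    have hp: "h [^] p = \<one>" using hpow gp xc by simp
    have key: "\<forall>n::nat. h [^] n \<noteq> \<one> \<longrightarrow> h [^] n \<in> S \<or> inv (h [^] n) \<in> S"
    proof (intro allI impI)
      fix n :: nat
      assume hn: "h [^] n \<noteq> \<one>"
      have gnc: "g [^] n \<in> carrier G" using gc by simp
      have "g [^] n \<otimes> x \<noteq> x"
      proof
        assume "g [^] n \<otimes> x = x"
        then have "h [^] n = inv x \<otimes> x" using hpow gnc xc by (simp add: m_assoc)
        then show False using hn xc by simp
      qed
      then have "cayley_adj G S (g [^] n \<otimes> x) x" using adj orb x by blast
      then obtain s where sS: "s \<in> S" and
        cs: "x = g [^] n \<otimes> x \<otimes> s \<or> g [^] n \<otimes> x = x \<otimes> s"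
        unfolding cayley_adj_def by blast
      have sc: "s \<in> carrier G" using sS SG by auto
      from cs show "h [^] n \<in> S \<or> inv (h [^] n) \<in> S"
      proof
        assume "g [^] n \<otimes> x = x \<otimes> s"
        then have "h [^] n = inv x \<otimes> (x \<otimes> s)" using hpow gnc xc by (simp add: m_assoc)
        then have "h [^] n = s" using xc sc by (simp add: m_assoc[symmetric])
        then show ?thesis using sS by simp
      next
        assume "x = g [^] n \<otimes> x \<otimes> s"
        then have "h [^] n \<otimes> s = inv x \<otimes> x" using hpow gnc xc sc by (simp add: m_assoc)
        then have "h [^] n \<otimes> s = \<one>" using xc by simp
        then have "inv s = h [^] n" using inv_equality hc sc by simp
        then have "inv (h [^] n) = s" using sc by (metis inv_inv)
        then show ?thesis using sS by simp
      qed
    qed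
    show "g = \<one>"
    proof (rule ccontr)
      assume gn: "g \<noteq> \<one>"
      have "h \<noteq> \<one>"
      proof
        assume "h = \<one>"
        then have "x \<otimes> (inv x \<otimes> g \<otimes> x) \<otimes> inv x = \<one>" using h_def xc by simp
        then have "g = \<one>" using xc gc by (simp add: m_assoc[symmetric] cancel_r_inv)
        then show False using gn by simp
      qed
      then have "h [^] (1::nat) \<noteq> \<one>" using hc by simp
      then have "h \<in> S \<or> inv h \<in> S" using key hc by (metis nat_pow_eone)
      then show False
      proof
        assume "h \<in> S"
        then show False using powers_in_S_False[OF SG ninv notri _ hp p0 key] by simp
      next
        assume ihS: "inv h \<in> S"
        have "inv h [^] p = \<one>" using hp hc by (simp add: nat_pow_inv)
        moreover have "\<forall>n::nat. inv h [^] n \<noteq> \<one> \<longrightarrow> inv h [^] n \<in> S \<or> inv (inv h [^] n) \<in> S"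
          using key hc by (auto simp: nat_pow_inv)
        ultimately show False using powers_in_S_False[OF SG ninv notri ihS _ p0] by simp
      qed
    qed
  qed
qed

theorem mainTheorem2:
  fixes G :: "('a, 'b) monoid_scheme" and S :: "'a set"
  assumes "group G"
    and "finite S" and "S \<subseteq> carrier G"
    and "generate G S = carrier G"
    and "\<forall>s \<in> S. inv\<^bsub>G\<^esub> s \<notin> S"
    and "\<not> (\<exists>a \<in> S. \<exists>b \<in> S. \<exists>c \<in> S. a \<otimes>\<^bsub>G\<^esub> b \<otimes>\<^bsub>G\<^esub> c = \<one>\<^bsub>G\<^esub>)"
    and "is_presentation G S (triangle_relators G S)"
  shows "flag_action_free G S"
  using group.main_aux[OF assms(1,3,5,6)] .

end
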